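(* Let $n\ge 2$ and $K\ge2$. The holomorphic map $\Phi_K=\pi_n\circ\Psi_K\colon(\mathbb{C}^{n(n-1)/2})^K\to\mathbb{C}^n\setminus\{0\}$ is a submersion (i.e. its differential has rank $n$) at a point $Z=(Z_1,\dots,Z_K)$ if and only if $Z\notin S_K$.
   Context: For $k\ge1$, $M_k\colon\mathbb{C}^{n(n-1)/2}\to\mathrm{SL}_n(\mathbb{C})$ is defined as follows: if $k$ is even, $Z_k=(z_{ij,k})_{1\le i<j\le n}$ and $M_k(Z_k)$ is the upper triangular unipotent matrix with $1$'s on the diagonal and entry $z_{ij,k}$ in position $(i,j)$, $i<j$; if $k$ is odd, $Z_k=(z_{ij,k})_{1\le j<i\le n}$ and $M_k(Z_k)$ is the lower triangular unipotent matrix with $1$'s on the diagonal and entry $z_{ij,k}$ in position $(i,j)$, $i>j$. Define $\Psi_K(Z_1,\dots,Z_K)=M_1(Z_1)^{-1}M_2(Z_2)^{-1}\cdots M_K(Z_K)^{-1}$, and let $\pi_n\colon\mathrm{SL}_n(\mathbb{C})\to\mathbb{C}^n\setminus\{0\}$ send a matrix to its last row. Define $$S_K=\bigcap_{\substack{1\le k<K\\ k\text{ odd}}}\{z_{n1,k}=\dots=z_{n(n-1),k}=0\}\ \cap\ \bigcap_{\substack{1\le k<K\\ k\text{ even}}}\{z_{1n,k}=\dots=z_{(n-1)n,k}=0\}\subset(\mathbb{C}^{n(n-1)/2})^K,$$ i.e. the set where the last row of every lower triangular factor $M_k$, $k<K$ odd, and the last column of every upper triangular factor $M_k$, $k<K$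 even, have all off-diagonal entries $0$ (no condition on $Z_K$). *)

theory Defs
  imports "HOL-Analysis.Analysis" "Jordan_Normal_Form.Matrix"
begin

text \<open>Coordinates: a point Z = (Z_1,...,Z_K) is a function Z k i j = z_{ij,k}
  (paper indices: k in 1..K, i,j in 1..n). Entries outside the coordinate
  index set are ignored by all constructions below.\<close>

definition coords :: "nat \<Rightarrow> nat \<Rightarrow> (nat \<times> nat \<times> nat) set" where
  "coords n K = {(k,i,j). 1 \<le> k \<and> k \<le> K \<and> 1 \<le> i \<and> i \<le> n \<and> 1 \<le> j \<and> j \<le> n \<and>
                   (if even k then i < j else j < i)}"

text \<open>M_k(Z_k): unipotent, upper triangular for even k, lower triangular for odd k.
  JNF matrices are 0-indexed, so entry (i,j) holds z_{(i+1)(j+1),k}.\<close>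
definition Mk :: "nat \<Rightarrow> nat \<Rightarrow> (nat \<Rightarrow> nat \<Rightarrow> nat \<Rightarrow> complex) \<Rightarrow> complex mat" where
  "Mk n k Z = mat n n (\<lambda>(i,j). if i = j then 1
                 else if even k \<and> i < j then Z k (i+1) (j+1)
                 else if odd k \<and> j < i then Z k (i+1) (j+1)
                 else 0)"

definition inv_mat :: "nat \<Rightarrow> complex mat \<Rightarrow> complex mat" where
  "inv_mat n A = (THE B. B \<in> carrier_mat n n \<and> A * B = 1\<^sub>m n \<and> B * A = 1\<^sub>m n)"

definition Psi :: "nat \<Rightarrow> nat \<Rightarrow> (nat \<Rightarrow> nat \<Rightarrow> nat \<Rightarrow> complex) \<Rightarrow> complex mat" where
  "Psi n K Z = foldr (\<lambda>k A. inv_mat n (Mk n k Z) * A) [1..<K+1] (1\<^sub>m n)"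

text \<open>Phi_K = pi_n o Psi_K : last row.\<close>
definition Phi :: "nat \<Rightarrow> nat \<Rightarrow> (nat \<Rightarrow> nat \<Rightarrow> nat \<Rightarrow> complex) \<Rightarrow> complex vec" where
  "Phi n K Z = row (Psi n K Z) (n - 1)"

definition dirs :: "nat \<Rightarrow> nat \<Rightarrow> (nat \<Rightarrow> nat \<Rightarrow> nat \<Rightarrow> complex) set" where
  "dirs n K = {W. \<forall>k i j. W k i j \<noteq> 0 \<longrightarrow> (k,i,j) \<in> coords n K}"

definition is_differential :: "nat \<Rightarrow> nat \<Rightarrow> (nat \<Rightarrow> nat \<Rightarrow> nat \<Rightarrow> complex)
     \<Rightarrow> ((nat \<Rightarrow> nat \<Rightarrow> nat \<Rightarrow> complex) \<Rightarrow> complex vec) \<Rightarrow> bool" where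
  "is_differential n K Z D \<longleftrightarrow>
     (\<forall>W \<in> dirs n K. D W \<in> carrier_vec n \<and>
        (\<forall>m < n. ((\<lambda>t::complex. Phi n K (\<lambda>k i j. Z k i j + t * W k i j) $ m)
                    has_field_derivative (D W $ m)) (at 0)))"

definition submersion_at :: "nat \<Rightarrow> nat \<Rightarrow> (nat \<Rightarrow> nat \<Rightarrow> nat \<Rightarrow> complex) \<Rightarrow> bool" where
  "submersion_at n K Z \<longleftrightarrow>
     (\<exists>D. is_differential n K Z D \<and> D ` dirs n K = carrier_vec n)"

definition S_set :: "nat \<Rightarrow> nat \<Rightarrow> (nat \<Rightarrow> nat \<Rightarrow> nat \<Rightarrow> complex) set" where
  "S_set n K = {Z. \<forall>k. 1 \<le> k \<and> k < K \<longrightarrow>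
      (odd k \<longrightarrow> (\<forall>j. 1 \<le> j \<and> j \<le> n - 1 \<longrightarrow> Z k n j = 0)) \<and>
      (even k \<longrightarrow> (\<forall>i. 1 \<le> i \<and> i \<le> n - 1 \<longrightarrow> Z k i n = 0))}"

end

theory Submission imports Defs begin

definition mderiv :: "nat \<Rightarrow> (complex \<Rightarrow> complex mat) \<Rightarrow> complex mat \<Rightarrow> bool" where
 "mderiv n A A' \<longleftrightarrow> (\<forall>i<n. \<forall>j<n. ((\<lambda>t. A t $$ (i,j)) has_field_derivative A' $$ (i,j)) (at 0))"

lemma mult_entry: "A \<in> carrier_mat n n \<Longrightarrow> B \<in> carrier_mat n n \<Longrightarrow> i<n \<Longrightarrow> j<n \<Longrightarrow>
  (A*B)$$(i,j) = (\<Sum>l<n. A$$(i,l) * B$$(l,j))"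
  by (auto simp: scalar_prod_def atLeast0LessThan intro!: sum.cong)

lemma mderiv_const: "mderiv n (\<lambda>t. C) (0\<^sub>m n n)"
  unfolding mderiv_def by auto

lemma mderiv_add: assumes "mderiv n A A'" "mderiv n B B'" "\<And>t. B t \<in> carrier_mat n n" "B' \<in> carrier_mat n n"
  shows "mderiv n (\<lambda>t. A t + B t) (A' + B')"
  unfolding mderiv_def
proof (intro allI impI)
  fix i j assume ij: "i<n" "j<n"
  have "((\<lambda>t. A t $$ (i,j) + B t $$ (i,j)) has_field_derivative A' $$ (i,j) + B' $$ (i,j)) (at 0)"
    using assms(1,2) ij unfolding mderiv_def by (intro DERIV_add) auto
  moreover have "(\<lambda>t. (A t + B t) $$ (i,j)) = (\<lambda>t. A t $$ (i,j) + B t $$ (i,j))"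
    using assms(3) ij by (intro ext) (metis carrier_matD index_add_mat(1))
  ultimately show "((\<lambda>t. (A t + B t) $$ (i,j)) has_field_derivative (A' + B') $$ (i,j)) (at 0)"
    using assms(3,4) ij by simp
qed

lemma mderiv_uminus: assumes "mderiv n A A'" "\<And>t. A t \<in> carrier_mat n n" "A' \<in> carrier_mat n n"
  shows "mderiv n (\<lambda>t. - A t) (- A')"
  unfolding mderiv_def
proof (intro allI impI)
  fix i j assume ij: "i<n" "j<n"
  have "((\<lambda>t. - A t $$ (i,j)) has_field_derivative - A' $$ (i,j)) (at 0)"
    using assms(1) ij unfolding mderiv_def by (intro DERIV_minus) auto
  moreover have "(\<lambda>t. (- A t) $$ (i,j)) = (\<lambda>t. - A t $$ (i,j))"
    using assms(2) ij by (intro ext) (metis carrier_matD index_uminus_mat(1))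
  ultimately show "((\<lambda>t. (- A t) $$ (i,j)) has_field_derivative (- A') $$ (i,j)) (at 0)"
    using assms(2,3) ij by simp
qed

lemma mderiv_mult: assumes "mderiv n A A'" "mderiv n B B'" "\<And>t. A t \<in> carrier_mat n n" "A' \<in> carrier_mat n n"
  "\<And>t. B t \<in> carrier_mat n n" "B' \<in> carrier_mat n n"
  shows "mderiv n (\<lambda>t. A t * B t) (A' * B 0 + A 0 * B')"
  unfolding mderiv_def
proof (intro allI impI)
  fix i j assume ij: "i<n" "j<n"
  have "((\<lambda>t. \<Sum>l<n. A t $$ (i,l) * B t $$ (l,j)) has_field_derivative 
     (\<Sum>l<n. A' $$ (i,l) * B 0 $$ (l,j) + B' $$ (l,j) * A 0 $$ (i,l))) (at 0)"
    using assms(1,2) ij unfolding mderiv_def by (intro DERIV_sum DERIV_mult) auto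
  moreover have "(\<Sum>l<n. A' $$ (i,l) * B 0 $$ (l,j) + B' $$ (l,j) * A 0 $$ (i,l)) = (A' * B 0 + A 0 * B') $$ (i,j)"
  proof -
    have "(A' * B 0 + A 0 * B') $$ (i,j) = (A' * B 0) $$ (i,j) + (A 0 * B') $$ (i,j)"
      using assms(3)[of 0, THEN carrier_matD(1)] assms(6) ij by (intro index_add_mat(1)) auto
    also have "\<dots> = (\<Sum>l<n. A' $$ (i,l) * B 0 $$ (l,j)) + (\<Sum>l<n. A 0 $$ (i,l) * B' $$ (l,j))"
      using assms ij by (simp add: mult_entry)
    finally show ?thesis by (simp add: sum.distrib mult.commute)
  qed
  moreover have "(\<lambda>t. (A t * B t) $$ (i,j)) = (\<lambda>t. \<Sum>l<n. A t $$ (i,l) * B t $$ (l,j))"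
    using assms(3,5) ij by (intro ext) (simp add: mult_entry)
  ultimately show "((\<lambda>t. (A t * B t) $$ (i,j)) has_field_derivative (A' * B 0 + A 0 * B') $$ (i,j)) (at 0)"
    by simp
qed

lemma mderiv_affine: assumes "A \<in> carrier_mat n n" "B \<in> carrier_mat n n"
  shows "mderiv n (\<lambda>t. A + t \<cdot>\<^sub>m B) B"
  unfolding mderiv_def
proof (intro allI impI)
  fix i j assume ij: "i<n" "j<n"
  have "((\<lambda>t. A $$ (i,j) + t * B $$ (i,j)) has_field_derivative 0 + 1 * B $$ (i,j)) (at 0)"
    by (intro DERIV_add DERIV_cmult_right DERIV_const DERIV_ident  derivative_intros) 
  then show "((\<lambda>t. (A + t \<cdot>\<^sub>m B) $$ (i,j)) has_field_derivative B $$ (i,j)) (at 0)"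
    using assms ij by simp
qed

lemma mderiv_unique: assumes "mderiv n A A'" "mderiv n A A''" "A' \<in> carrier_mat n n" "A'' \<in> carrier_mat n n"
  shows "A' = A''"
proof (intro eq_matI)
  fix i j assume "i < dim_row A''" "j < dim_col A''"
  then have ij: "i<n" "j<n" using assms by auto
  show "A' $$ (i,j) = A'' $$ (i,j)"
  proof -
    have d1: "((\<lambda>t. A t $$ (i,j)) has_field_derivative A' $$ (i,j)) (at 0)" using assms(1) ij unfolding mderiv_def by auto
    have d2: "((\<lambda>t. A t $$ (i,j)) has_field_derivative A'' $$ (i,j)) (at 0)" using assms(2) ij unfolding mderiv_def by auto
    show ?thesis by (rule DERIV_unique[OF d1 d2])
  qed
qed (use assms in auto)

lemma sq_one_left[simp]: "(A::complex mat) \<in> carrier_mat n n \<Longrightarrow> 1\<^sub>m n * A = A" by (rule left_mult_one_mat)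
lemma sq_one_right[simp]: "(A::complex mat) \<in> carrier_mat n n \<Longrightarrow> A * 1\<^sub>m n = A" by (rule right_mult_one_mat)
lemma sq_mult_carrier[simp]: "A \<in> carrier_mat n n \<Longrightarrow> B \<in> carrier_mat n n \<Longrightarrow> A * B \<in> carrier_mat n n" by auto
lemma plus_zero_smult[simp]: "dim_row B = dim_row A \<Longrightarrow> dim_col B = dim_col A \<Longrightarrow> A + (0::complex) \<cdot>\<^sub>m B = A"
  by (intro eq_matI) auto
lemma one_minus_zero[simp]: "(1\<^sub>m n :: complex mat) - 0\<^sub>m n n = 1\<^sub>m n" by (intro eq_matI) auto

definition NZ :: "nat \<Rightarrow> nat \<Rightarrow> (nat \<Rightarrow> nat \<Rightarrow> nat \<Rightarrow> complex) \<Rightarrow> complex mat" where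
 "NZ n k Y = mat n n (\<lambda>(i,j). if even k \<and> i < j then Y k (i+1) (j+1)
      else if odd k \<and> j < i then Y k (i+1) (j+1) else 0)"

lemma NZ_carrier[simp]: "NZ n k Y \<in> carrier_mat n n" by (simp add: NZ_def)
lemma NZ_dim[simp]: "dim_row (NZ n k Y) = n" "dim_col (NZ n k Y) = n" by (simp_all add: NZ_def)

lemma Mk_NZ: "Mk n k Y = 1\<^sub>m n + NZ n k Y"
  by (intro eq_matI) (auto simp: Mk_def NZ_def)

lemma Mk_carrier[simp]: "Mk n k Y \<in> carrier_mat n n" by (simp add: Mk_def)
lemma Mk_dim[simp]: "dim_row (Mk n k Y) = n" "dim_col (Mk n k Y) = n" by (simp_all add: Mk_def)

definition strict :: "nat \<Rightarrow> nat \<Rightarrow> complex mat \<Rightarrow> bool" where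
 "strict n k N \<longleftrightarrow> N \<in> carrier_mat n n \<and> (\<forall>i<n. \<forall>j<n. N$$(i,j) \<noteq> 0 \<longrightarrow> (if even k then i<j else j<i))"

lemma strict_NZ: "strict n k (NZ n k Y)"
  unfolding strict_def NZ_def by auto

fun Qp :: "nat \<Rightarrow> complex mat \<Rightarrow> nat \<Rightarrow> complex mat" where
  "Qp n N 0 = 1\<^sub>m n"
| "Qp n N (Suc m) = - (N * Qp n N m)"

fun Gi :: "nat \<Rightarrow> complex mat \<Rightarrow> nat \<Rightarrow> complex mat" where
  "Gi n N 0 = 0\<^sub>m n n"
| "Gi n N (Suc m) = 1\<^sub>m n - N * Gi n N m"

lemma Qp_carrier[simp]: "N \<in> carrier_mat n n \<Longrightarrow> Qp n N m \<in> carrier_mat n n"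
  by (induction m) auto

lemma Gi_carrier[simp]: "N \<in> carrier_mat n n \<Longrightarrow> Gi n N m \<in> carrier_mat n n"
  by (induction m) auto

lemma Qp_dim[simp]: "N \<in> carrier_mat n n \<Longrightarrow> dim_row (Qp n N m) = n \<and> dim_col (Qp n N m) = n"
  using Qp_carrier[of N n m] by (simp only: carrier_mat_def mem_Collect_eq)
lemma Gi_dim[simp]: "N \<in> carrier_mat n n \<Longrightarrow> dim_row (Gi n N m) = n \<and> dim_col (Gi n N m) = n"
  using Gi_carrier[of N n m] by (simp only: carrier_mat_def mem_Collect_eq)

lemma Qp_strict: assumes "strict n k N"
  shows "i<n \<Longrightarrow> j<n \<Longrightarrow> Qp n N m $$ (i,j) \<noteq> 0 \<Longrightarrow> (if even k then i + m \<le> j else j + m \<le> i)"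
proof (induction m arbitrary: i j)
  case 0
  then show ?case by (auto split: if_splits)
next
  case (Suc m)
  have N: "N \<in> carrier_mat n n" using assms strict_def by auto
  have "Qp n N (Suc m) $$ (i,j) = - (\<Sum>l<n. N$$(i,l) * Qp n N m $$ (l,j))"
  proof -
    have d: "dim_row (N * Qp n N m) = n" "dim_col (N * Qp n N m) = n" using N by auto
    show ?thesis using Suc.prems N d by (simp add: mult_entry[symmetric])
  qed
  with Suc.prems have "(\<Sum>l<n. N$$(i,l) * Qp n N m $$ (l,j)) \<noteq> 0" by auto
  then obtain l where l: "l<n" "N$$(i,l) \<noteq> 0" "Qp n N m $$ (l,j) \<noteq> 0"
    by (metis (no_types, lifting) lessThan_iff mult_eq_0_iff sum.neutral)
  have "if even k then i<l else l<i" using assms l Suc.prems unfolding strict_def by blast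
  moreover have "if even k then l + m \<le> j else j + m \<le> l" using Suc.IH l Suc.prems by blast
  ultimately show ?case by (auto split: if_splits)
qed

lemma Qp_nil: assumes "strict n k N" shows "Qp n N n = 0\<^sub>m n n"
proof (intro eq_matI)
  fix i j assume "i < dim_row (0\<^sub>m n n)" "j < dim_col (0\<^sub>m n n)"
  then have ij: "i<n" "j<n" by auto
  show "Qp n N n $$ (i,j) = 0\<^sub>m n n $$ (i,j)"
    using Qp_strict[OF assms ij, of n] ij by (cases "even k") auto
qed (use assms strict_def in auto)

lemma Gi_comm: assumes N: "N \<in> carrier_mat n n" shows "N * Gi n N m = Gi n N m * N"
proof (induction m)
  case 0 then show ?case using N by auto
next
  case (Suc m)
  have G: "Gi n N m \<in> carrier_mat n n" using N by simp
  have NG: "N * Gi n N m \<in> carrier_mat n n" using N G by simp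
  have "N * Gi n N (Suc m) = N * 1\<^sub>m n - N * (N * Gi n N m)"
    using mult_minus_distrib_mat[OF N one_carrier_mat NG] by simp
  then have "N * Gi n N (Suc m) = N - N * (N * Gi n N m)" using N by simp
  also have "N * (N * Gi n N m) = (N * Gi n N m) * N" by (simp add: assoc_mult_mat[OF N G N, symmetric] Suc.IH)
  also have "N - (N * Gi n N m) * N = Gi n N (Suc m) * N"
    using minus_mult_distrib_mat[OF one_carrier_mat NG N] N by simp
  finally show ?case .
qed

lemma Gi_inv: assumes N: "N \<in> carrier_mat n n"
  shows "(1\<^sub>m n + N) * Gi n N m = 1\<^sub>m n - Qp n N m"
proof (induction m)
  case 0 then show ?case using N by (intro eq_matI) auto
next
  case (Suc m)
  have G: "Gi n N m \<in> carrier_mat n n" using N by simp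
  have Q: "Qp n N m \<in> carrier_mat n n" using N by simp
  have NG: "N * Gi n N m \<in> carrier_mat n n" using N G by simp
  have IN: "1\<^sub>m n + N \<in> carrier_mat n n" using N by simp
  have "(1\<^sub>m n + N) * Gi n N (Suc m) = (1\<^sub>m n + N) - (1\<^sub>m n + N) * (N * Gi n N m)"
    using mult_minus_distrib_mat[OF IN one_carrier_mat NG] N by simp
  also have "(1\<^sub>m n + N) * (N * Gi n N m) = N * ((1\<^sub>m n + N) * Gi n N m)"
  proof -
    have "(1\<^sub>m n + N) * (N * Gi n N m) = N * Gi n N m + N * (N * Gi n N m)"
      using add_mult_distrib_mat[OF one_carrier_mat N NG] NG by simp
    moreover have "N * ((1\<^sub>m n + N) * Gi n N m) = N * Gi n N m + N * (N * Gi n N m)"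
      using add_mult_distrib_mat[OF one_carrier_mat N G] mult_add_distrib_mat[OF N G] N G
        by (simp add: assoc_mult_mat[OF N N G])
    ultimately show ?thesis by simp
  qed
  also have "\<dots> = N - N * Qp n N m" using Suc.IH mult_minus_distrib_mat[OF N one_carrier_mat Q] N by simp
  finally show ?case using N Q by (intro eq_matI) auto
qed

lemma Gi_inv2: assumes N: "N \<in> carrier_mat n n"
  shows "Gi n N m * (1\<^sub>m n + N) = 1\<^sub>m n - Qp n N m"
proof -
  have G: "Gi n N m \<in> carrier_mat n n" using N by simp
  have "Gi n N m * (1\<^sub>m n + N) = Gi n N m * 1\<^sub>m n + Gi n N m * N" by (rule mult_add_distrib_mat[OF G one_carrier_mat N])
  then have "Gi n N m * (1\<^sub>m n + N) = Gi n N m + Gi n N m * N" using G by simp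
  also have "\<dots> = Gi n N m + N * Gi n N m" using Gi_comm[OF N] by simp
  also have "\<dots> = (1\<^sub>m n + N) * Gi n N m" using add_mult_distrib_mat[OF one_carrier_mat N G] G by simp
  finally show ?thesis using Gi_inv[OF N] by simp
qed

lemma inv_mat_eq: assumes "A \<in> carrier_mat n n" "B \<in> carrier_mat n n" "A * B = 1\<^sub>m n" "B * A = 1\<^sub>m n"
  shows "inv_mat n A = B"
  unfolding inv_mat_def
proof (rule the_equality)
  fix C assume C: "C \<in> carrier_mat n n \<and> A * C = 1\<^sub>m n \<and> C * A = 1\<^sub>m n"
  then have Cc: "C \<in> carrier_mat n n" and CA: "C * A = 1\<^sub>m n" by simp_all
  have e1: "C = C * (A * B)" using assms(3) Cc by simp
  have e2: "C * (A * B) = (C * A) * B" using assoc_mult_mat[OF Cc assms(1,2)] by simp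
  have e3: "(C * A) * B = B" using assms(2) CA by simp
  from e1 e2 e3 show "C = B" by simp
qed (use assms in auto)

definition Xinv :: "nat \<Rightarrow> nat \<Rightarrow> (nat \<Rightarrow> nat \<Rightarrow> nat \<Rightarrow> complex) \<Rightarrow> complex mat" where
  "Xinv n k Y = inv_mat n (Mk n k Y)"

lemma Xinv_Gi: "Xinv n k Y = Gi n (NZ n k Y) n"
proof -
  have s: "strict n k (NZ n k Y)" by (rule strict_NZ)
  show ?thesis unfolding Xinv_def Mk_NZ
    by (rule inv_mat_eq) (auto simp: Gi_inv Gi_inv2 Qp_nil[OF s])
qed

lemma Xinv_carrier[simp]: "Xinv n k Y \<in> carrier_mat n n" by (simp add: Xinv_Gi)
lemma Xinv_dim[simp]: "dim_row (Xinv n k Y) = n" "dim_col (Xinv n k Y) = n" using Xinv_carrier[of n k Y] by (simp_all only: carrier_mat_def mem_Collect_eq)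

lemma Xinv_right: "Mk n k Y * Xinv n k Y = 1\<^sub>m n"
  using strict_NZ[of n k Y] by (simp add: Xinv_Gi Mk_NZ Gi_inv Qp_nil)

lemma Xinv_left: "Xinv n k Y * Mk n k Y = 1\<^sub>m n"
  using strict_NZ[of n k Y] by (simp add: Xinv_Gi Mk_NZ Gi_inv2 Qp_nil)


lemma mderiv_minus: assumes "mderiv n A A'" "mderiv n B B'" "\<And>t. A t \<in> carrier_mat n n" "\<And>t. B t \<in> carrier_mat n n" "A' \<in> carrier_mat n n" "B' \<in> carrier_mat n n"
  shows "mderiv n (\<lambda>t. A t - B t) (A' - B')"
proof -
  have "mderiv n (\<lambda>t. A t + - B t) (A' + - B')"
    using assms by (intro mderiv_add mderiv_uminus) auto
  moreover have "(\<lambda>t. A t + - B t) = (\<lambda>t. A t - B t)" using assms(3,4) by (intro ext) (metis minus_add_uminus_mat)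
  moreover have "A' + - B' = A' - B'" using assms(5,6) by (metis minus_add_uminus_mat)
  ultimately show ?thesis by simp
qed

lemma add_eq_zero_uminus: assumes "A \<in> carrier_mat n n" "(D::complex mat) \<in> carrier_mat n n" "A + D = 0\<^sub>m n n"
  shows "D = - A"
proof (intro eq_matI)
  fix i j assume "i < dim_row (- A)" "j < dim_col (- A)"
  then have ij: "i<n" "j<n" using assms by auto
  have dD: "dim_row D = n" "dim_col D = n" using assms(2) by auto
  have e: "(A + D) $$ (i,j) = A $$ (i,j) + D $$ (i,j)" by (intro index_add_mat(1)) (use ij dD in auto)
  have "(A + D) $$ (i,j) = 0" unfolding assms(3) using ij by simp
  with e have "A $$ (i,j) + D $$ (i,j) = 0" by simp
  then show "D $$ (i,j) = (- A) $$ (i,j)" using assms(1) ij by (simp add: eq_neg_iff_add_eq_0 add.commute)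
qed (use assms in auto)

definition sh :: "(nat \<Rightarrow> nat \<Rightarrow> nat \<Rightarrow> complex) \<Rightarrow> (nat \<Rightarrow> nat \<Rightarrow> nat \<Rightarrow> complex) \<Rightarrow> complex \<Rightarrow> (nat \<Rightarrow> nat \<Rightarrow> nat \<Rightarrow> complex)" where
  "sh Z W t = (\<lambda>k i j. Z k i j + t * W k i j)"

lemma sh0[simp]: "sh Z W 0 = Z" by (simp add: sh_def)

lemma NZ_sh: "NZ n k (sh Z W t) = NZ n k Z + t \<cdot>\<^sub>m NZ n k W"
  by (intro eq_matI) (auto simp: NZ_def sh_def)

lemma Gi_deriv: assumes "N0 \<in> carrier_mat n n" "N1 \<in> carrier_mat n n"
  shows "\<exists>D \<in> carrier_mat n n. mderiv n (\<lambda>t. Gi n (N0 + t \<cdot>\<^sub>m N1) m) D"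
proof (induction m)
  case 0
  then show ?case by (intro bexI[of _ "0\<^sub>m n n"]) (auto simp: mderiv_const)
next
  case (Suc m)
  then obtain D where D: "D \<in> carrier_mat n n" "mderiv n (\<lambda>t. Gi n (N0 + t \<cdot>\<^sub>m N1) m) D" by auto
  have c: "\<And>t. N0 + t \<cdot>\<^sub>m N1 \<in> carrier_mat n n" using assms by auto
  have "mderiv n (\<lambda>t. 1\<^sub>m n - (N0 + t \<cdot>\<^sub>m N1) * Gi n (N0 + t \<cdot>\<^sub>m N1) m)
          (0\<^sub>m n n - (N1 * Gi n (N0 + 0 \<cdot>\<^sub>m N1) m + (N0 + 0 \<cdot>\<^sub>m N1) * D))"
    using assms c D by (intro mderiv_minus mderiv_const mderiv_mult mderiv_affine) auto
  then show ?case using assms D by (intro bexI[of _ "0\<^sub>m n n - (N1 * Gi n (N0 + 0 \<cdot>\<^sub>m N1) m + (N0 + 0 \<cdot>\<^sub>m N1) * D)"]) auto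
qed

definition XD :: "nat \<Rightarrow> nat \<Rightarrow> (nat \<Rightarrow> nat \<Rightarrow> nat \<Rightarrow> complex) \<Rightarrow> (nat \<Rightarrow> nat \<Rightarrow> nat \<Rightarrow> complex) \<Rightarrow> complex mat" where
  "XD n k Z W = - (Xinv n k Z * NZ n k W * Xinv n k Z)"

lemma XD_carrier[simp]: "XD n k Z W \<in> carrier_mat n n" by (simp add: XD_def)

lemma Xinv_deriv: "mderiv n (\<lambda>t. Xinv n k (sh Z W t)) (XD n k Z W)"
proof -
  let ?N0 = "NZ n k Z" and ?N1 = "NZ n k W"
  obtain D where D: "D \<in> carrier_mat n n" "mderiv n (\<lambda>t. Gi n (?N0 + t \<cdot>\<^sub>m ?N1) n) D"
    using Gi_deriv[of ?N0 n ?N1 n] by auto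
  have eq: "(\<lambda>t. Xinv n k (sh Z W t)) = (\<lambda>t. Gi n (?N0 + t \<cdot>\<^sub>m ?N1) n)"
    by (simp add: Xinv_Gi NZ_sh)
  have dX: "mderiv n (\<lambda>t. Xinv n k (sh Z W t)) D" using D eq by simp
  have M: "\<And>t. Mk n k (sh Z W t) = Mk n k Z + t \<cdot>\<^sub>m ?N1"
    by (intro eq_matI) (auto simp: Mk_def NZ_def sh_def)
  have "mderiv n (\<lambda>t. Mk n k (sh Z W t) * Xinv n k (sh Z W t)) (?N1 * Xinv n k Z + Mk n k Z * D)"
    using mderiv_mult[OF mderiv_affine[of "Mk n k Z" n ?N1] dX] D unfolding M by auto
  moreover have "mderiv n (\<lambda>t. Mk n k (sh Z W t) * Xinv n k (sh Z W t)) (0\<^sub>m n n)"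
    unfolding Xinv_right by (rule mderiv_const)
  ultimately have z: "?N1 * Xinv n k Z + Mk n k Z * D = 0\<^sub>m n n"
    using D by (intro mderiv_unique) auto
  let ?X = "Xinv n k Z"
  have X: "?X \<in> carrier_mat n n" by simp
  have "?X * (?N1 * ?X + Mk n k Z * D) = ?X * ?N1 * ?X + D"
  proof -
    have N1: "?N1 \<in> carrier_mat n n" by simp
    have M: "Mk n k Z \<in> carrier_mat n n" by simp
    have "?X * (?N1 * ?X + Mk n k Z * D) = ?X * (?N1 * ?X) + ?X * (Mk n k Z * D)"
      using D X by (intro mult_add_distrib_mat[OF X]) auto
    also have "?X * (?N1 * ?X) = ?X * ?N1 * ?X" using assoc_mult_mat[OF X N1 X] by simp
    also have "?X * (Mk n k Z * D) = D" using assoc_mult_mat[OF X M D(1)] D(1) by (simp add: Xinv_left)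
    finally show ?thesis .
  qed
  then have "?X * ?N1 * ?X + D = 0\<^sub>m n n" using z X by simp
  then have "D = - (?X * ?N1 * ?X)" using D X
    by (intro add_eq_zero_uminus) auto
  then show ?thesis using dX by (simp add: XD_def)
qed


definition PL :: "nat \<Rightarrow> (nat \<Rightarrow> nat \<Rightarrow> nat \<Rightarrow> complex) \<Rightarrow> nat list \<Rightarrow> complex mat \<Rightarrow> complex mat" where
  "PL n Y L B = foldr (\<lambda>k A. Xinv n k Y * A) L B"

lemma PL_Nil[simp]: "PL n Y [] B = B" by (simp add: PL_def)
lemma PL_Cons[simp]: "PL n Y (k#L) B = Xinv n k Y * PL n Y L B" by (simp add: PL_def)
lemma PL_append: "PL n Y (L1 @ L2) B = PL n Y L1 (PL n Y L2 B)" by (simp add: PL_def)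

lemma PL_carrier[simp]: "B \<in> carrier_mat n n \<Longrightarrow> PL n Y L B \<in> carrier_mat n n"
  by (induction L) auto

lemma PL_dim[simp]: "B \<in> carrier_mat n n \<Longrightarrow> dim_row (PL n Y L B) = n \<and> dim_col (PL n Y L B) = n"
  using PL_carrier[of B n Y L] by (simp only: carrier_mat_def mem_Collect_eq)

lemma PL_mult: assumes "B \<in> carrier_mat n n" "C \<in> carrier_mat n n"
  shows "PL n Y L B * C = PL n Y L (B * C)"
proof (induction L)
  case Nil then show ?case by simp
next
  case (Cons k L)
  have "Xinv n k Y * PL n Y L B * C = Xinv n k Y * (PL n Y L B * C)"
    using assms by (intro assoc_mult_mat[of _ n n _ n _ n]) auto
  then show ?case using Cons by simp
qed

lemma Psi_PL: "Psi n K Y = PL n Y [1..<K+1] (1\<^sub>m n)"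
  by (simp add: Psi_def PL_def Xinv_def)

fun DL :: "nat \<Rightarrow> (nat \<Rightarrow> nat \<Rightarrow> nat \<Rightarrow> complex) \<Rightarrow> (nat \<Rightarrow> nat \<Rightarrow> nat \<Rightarrow> complex) \<Rightarrow> nat list \<Rightarrow> complex mat \<Rightarrow> complex mat \<Rightarrow> complex mat" where
  "DL n Z W [] B0 B' = B'"
| "DL n Z W (k#L) B0 B' = XD n k Z W * PL n Z L B0 + Xinv n k Z * DL n Z W L B0 B'"

lemma DL_carrier[simp]: "B0 \<in> carrier_mat n n \<Longrightarrow> B' \<in> carrier_mat n n \<Longrightarrow> DL n Z W L B0 B' \<in> carrier_mat n n"
  by (induction L) auto

lemma DL_dim[simp]: "B0 \<in> carrier_mat n n \<Longrightarrow> B' \<in> carrier_mat n n \<Longrightarrow> dim_row (DL n Z W L B0 B') = n \<and> dim_col (DL n Z W L B0 B') = n"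
  using DL_carrier[of B0 n B' Z W L] by (simp only: carrier_mat_def mem_Collect_eq)

lemma PL_deriv: assumes "\<And>t. B t \<in> carrier_mat n n" "B' \<in> carrier_mat n n" "mderiv n B B'"
  shows "mderiv n (\<lambda>t. PL n (sh Z W t) L (B t)) (DL n Z W L (B 0) B')"
proof (induction L)
  case Nil then show ?case using assms by simp
next
  case (Cons k L)
  have "mderiv n (\<lambda>t. Xinv n k (sh Z W t) * PL n (sh Z W t) L (B t))
     (XD n k Z W * PL n (sh Z W 0) L (B 0) + Xinv n k (sh Z W 0) * DL n Z W L (B 0) B')"
    using assms Cons by (intro mderiv_mult Xinv_deriv) auto
  then show ?case by simp
qed

definition Dfun :: "nat \<Rightarrow> nat \<Rightarrow> (nat \<Rightarrow> nat \<Rightarrow> nat \<Rightarrow> complex) \<Rightarrow> (nat \<Rightarrow> nat \<Rightarrow> nat \<Rightarrow> complex) \<Rightarrow> complex vec" where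
  "Dfun n K Z W = row (DL n Z W [1..<K+1] (1\<^sub>m n) (0\<^sub>m n n)) (n - 1)"

lemma Phi_entry_deriv: assumes "1 \<le> n" "m < n"
  shows "((\<lambda>t::complex. Phi n K (\<lambda>k i j. Z k i j + t * W k i j) $ m) has_field_derivative (Dfun n K Z W $ m)) (at 0)"
proof -
  have d: "mderiv n (\<lambda>t. PL n (sh Z W t) [1..<K+1] (1\<^sub>m n)) (DL n Z W [1..<K+1] (1\<^sub>m n) (0\<^sub>m n n))"
    using PL_deriv[of "\<lambda>t. 1\<^sub>m n" n "0\<^sub>m n n" Z W "[1..<K+1]"] by (simp add: mderiv_const)
  have n1: "n - 1 < n" using assms by simp
  have "(\<lambda>t::complex. Phi n K (\<lambda>k i j. Z k i j + t * W k i j) $ m) = (\<lambda>t. PL n (sh Z W t) [1..<K+1] (1\<^sub>m n) $$ (n-1, m))"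
    using assms n1 by (intro ext) (simp add: Phi_def Psi_PL sh_def)
  moreover have "Dfun n K Z W $ m = DL n Z W [1..<K+1] (1\<^sub>m n) (0\<^sub>m n n) $$ (n-1,m)"
    using assms n1 DL_carrier[of "1\<^sub>m n" n "0\<^sub>m n n" Z W "[1..<K+1]"] unfolding Dfun_def
    by (intro index_row) auto
  ultimately show ?thesis using d n1 assms unfolding mderiv_def by simp
qed

lemma Dfun_diff: assumes "1 \<le> n" shows "is_differential n K Z (Dfun n K Z)"
  unfolding is_differential_def
proof (intro ballI conjI allI impI)
  fix W show "Dfun n K Z W \<in> carrier_vec n"
    using assms unfolding Dfun_def by (intro row_carrier_vec[of _ n _ n]) auto
next
  fix W m assume "m < n"
  then show "((\<lambda>t::complex. Phi n K (\<lambda>k i j. Z k i j + t * W k i j) $ m) has_field_derivative (Dfun n K Z W $ m)) (at 0)"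
    using Phi_entry_deriv assms by blast
qed


lemma mult_rowe: assumes "(A::complex mat) \<in> carrier_mat n n" "B \<in> carrier_mat n n" "p < n" "j < n"
  "\<forall>j<n. A$$(p,j) = (if j = p then 1 else 0)"
  shows "(A*B)$$(p,j) = B$$(p,j)"
proof -
  have "(A*B)$$(p,j) = (\<Sum>l<n. A$$(p,l) * B$$(l,j))" using mult_entry[OF assms(1,2,3,4)] .
  also have "\<dots> = (\<Sum>l<n. (if l = p then B$$(l,j) else 0))" using assms(5) by (intro sum.cong) auto
  also have "\<dots> = B$$(p,j)" using assms(3) by (simp add: sum.delta)
  finally show ?thesis .
qed

lemma mult_cole: assumes "(A::complex mat) \<in> carrier_mat n n" "B \<in> carrier_mat n n" "p < n" "i < n"
  "\<forall>i<n. B$$(i,p) = (if i = p then 1 else 0)"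
  shows "(A*B)$$(i,p) = A$$(i,p)"
proof -
  have "(A*B)$$(i,p) = (\<Sum>l<n. A$$(i,l) * B$$(l,p))" using mult_entry[OF assms(1,2,4,3)] .
  also have "\<dots> = (\<Sum>l<n. (if l = p then A$$(i,l) else 0))" using assms(5) by (intro sum.cong) auto
  also have "\<dots> = A$$(i,p)" using assms(3) by (simp add: sum.delta)
  finally show ?thesis .
qed

definition fixl :: "nat \<Rightarrow> complex mat \<Rightarrow> bool" where
  "fixl n A \<longleftrightarrow> (\<forall>j<n. A$$(n-1,j) = (if j = n-1 then 1 else 0)) \<and> (\<forall>i<n. A$$(i,n-1) = (if i = n-1 then 1 else 0))"

lemma fixl_mult: assumes "1 \<le> n" "A \<in> carrier_mat n n" "B \<in> carrier_mat n n" "fixl n A" "fixl n B"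
  shows "fixl n (A*B)"
  unfolding fixl_def
proof (intro conjI allI impI)
  fix j assume "j<n"
  then show "(A*B)$$(n-1,j) = (if j = n-1 then 1 else 0)"
    using assms mult_rowe[of A n B "n-1" j] unfolding fixl_def by auto
next
  fix i assume "i<n"
  then show "(A*B)$$(i,n-1) = (if i = n-1 then 1 else 0)"
    using assms mult_cole[of A n B "n-1" i] unfolding fixl_def by auto
qed

lemma fixl_one: "fixl n (1\<^sub>m n)" unfolding fixl_def by auto

lemma fixl_inv: assumes "1 \<le> n" "A \<in> carrier_mat n n" "X \<in> carrier_mat n n" "A * X = 1\<^sub>m n" "X * A = 1\<^sub>m n" "fixl n A"
  shows "fixl n X"
  unfolding fixl_def
proof (intro conjI allI impI)
  fix j assume j: "j<n"
  have "(A*X)$$(n-1,j) = X$$(n-1,j)" using assms j by (intro mult_rowe[of A n X]) (auto simp: fixl_def)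
  then show "X$$(n-1,j) = (if j = n-1 then 1 else 0)" using assms(1,4) j by (cases "j = n-1") auto
next
  fix i assume i: "i<n"
  have "(X*A)$$(i,n-1) = X$$(i,n-1)" using assms i by (intro mult_cole[of X n A]) (auto simp: fixl_def)
  then show "X$$(i,n-1) = (if i = n-1 then 1 else 0)" using assms(1,5) i by (cases "i = n-1") auto
qed

lemma fixl_Mk: assumes "2 \<le> n" "odd k \<longrightarrow> (\<forall>j. 1 \<le> j \<and> j \<le> n - 1 \<longrightarrow> Z k n j = 0)"
   "even k \<longrightarrow> (\<forall>i. 1 \<le> i \<and> i \<le> n - 1 \<longrightarrow> Z k i n = 0)"
  shows "fixl n (Mk n k Z)"
  unfolding fixl_def Mk_def using assms by auto

lemma fixl_Xinv: assumes "1 \<le> n" "fixl n (Mk n k Z)" shows "fixl n (Xinv n k Z)"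
  using fixl_inv[OF assms(1) Mk_carrier Xinv_carrier Xinv_right Xinv_left assms(2)] .

lemma fixl_PL: assumes "1 \<le> n" "B \<in> carrier_mat n n" "fixl n B" "\<forall>k\<in>set L. fixl n (Xinv n k Z)"
  shows "fixl n (PL n Z L B)"
  using assms(4) proof (induction L)
  case Nil then show ?case using assms by simp
next
  case (Cons k L)
  then show ?case using assms by (simp add: fixl_mult)
qed

lemma DL_append: "DL n Z W (L1 @ L2) B0 B' = DL n Z W L1 (PL n Z L2 B0) (DL n Z W L2 B0 B')"
  by (induction L1) (simp_all add: PL_append)

lemma XD_ll: assumes "1 \<le> n" "fixl n (Xinv n k Z)" shows "XD n k Z W $$ (n-1,n-1) = 0"
proof -
  let ?X = "Xinv n k Z" and ?N = "NZ n k W"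
  have l: "n - 1 < n" using assms by simp
  have "(?X * ?N * ?X) $$ (n-1,n-1) = (?X * ?N) $$ (n-1,n-1)"
    using assms l by (intro mult_cole[of _ n]) (auto simp: fixl_def)
  also have "\<dots> = ?N $$ (n-1,n-1)"
    using assms l by (intro mult_rowe[of _ n]) (auto simp: fixl_def)
  also have "\<dots> = 0" using l by (simp add: NZ_def)
  finally show ?thesis using l by (simp add: XD_def)
qed

lemma DL_fix: assumes "1 \<le> n" "B0 \<in> carrier_mat n n" "B' \<in> carrier_mat n n" "C \<in> carrier_mat n n"
  "fixl n (B0 * C)" "\<forall>k\<in>set L. fixl n (Xinv n k Z)"
  shows "(DL n Z W L B0 B' * C) $$ (n-1,n-1) = (B' * C) $$ (n-1,n-1)"
  using assms(6) proof (induction L)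
  case Nil then show ?case by simp
next
  case (Cons k L)
  have l: "n - 1 < n" using assms by simp
  have fk: "fixl n (Xinv n k Z)" using Cons by simp
  let ?X = "Xinv n k Z" and ?P = "PL n Z L B0" and ?D = "DL n Z W L B0 B'"
  have c: "?P \<in> carrier_mat n n" "?D \<in> carrier_mat n n" using assms by auto
  have "DL n Z W (k#L) B0 B' * C = XD n k Z W * (?P * C) + ?X * (?D * C)"
    using assms c by (simp add: add_mult_distrib_mat[of _ n n] assoc_mult_mat[of _ n n _ n _ n])
  moreover have "?P * C = PL n Z L (B0 * C)" using assms by (simp add: PL_mult)
  moreover have "fixl n (PL n Z L (B0 * C))" using assms Cons by (intro fixl_PL) auto
  ultimately have e: "DL n Z W (k#L) B0 B' * C = XD n k Z W * PL n Z L (B0 * C) + ?X * (?D * C)" by simp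
  have "(XD n k Z W * PL n Z L (B0 * C)) $$ (n-1,n-1) = XD n k Z W $$ (n-1,n-1)"
    using assms l \<open>fixl n (PL n Z L (B0 * C))\<close> by (intro mult_cole[of _ n]) (auto simp: fixl_def)
  also have "\<dots> = 0" using XD_ll[OF assms(1) fk] .
  finally have t1: "(XD n k Z W * PL n Z L (B0 * C)) $$ (n-1,n-1) = 0" .
  have t2: "(?X * (?D * C)) $$ (n-1,n-1) = (?D * C) $$ (n-1,n-1)"
    using assms l fk c by (intro mult_rowe[of _ n]) (auto simp: fixl_def)
  have "(DL n Z W (k#L) B0 B' * C) $$ (n-1,n-1) = (XD n k Z W * PL n Z L (B0 * C)) $$ (n-1,n-1) + (?X * (?D * C)) $$ (n-1,n-1)"
    unfolding e using l assms c by (intro index_add_mat(1)) auto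
  then show ?case using t1 t2 Cons by simp
qed


lemma D_unique: assumes "1 \<le> n" "is_differential n K Z D" "W \<in> dirs n K"
  shows "D W = Dfun n K Z W"
proof -
  have c1: "D W \<in> carrier_vec n" using assms unfolding is_differential_def by auto
  have c2: "Dfun n K Z W \<in> carrier_vec n" using Dfun_diff[OF assms(1)] assms(3) unfolding is_differential_def by auto
  show ?thesis
  proof (rule eq_vecI)
    fix m assume "m < dim_vec (Dfun n K Z W)"
    then have m: "m < n" using c2 by auto
    have d1: "((\<lambda>t::complex. Phi n K (\<lambda>k i j. Z k i j + t * W k i j) $ m) has_field_derivative (D W $ m)) (at 0)"
      using assms m unfolding is_differential_def by auto
    have d2: "((\<lambda>t::complex. Phi n K (\<lambda>k i j. Z k i j + t * W k i j) $ m) has_field_derivative (Dfun n K Z W $ m)) (at 0)"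
      using Phi_entry_deriv[OF assms(1) m] .
    show "D W $ m = Dfun n K Z W $ m" by (rule DERIV_unique[OF d1 d2])
  qed (use c1 c2 in auto)
qed

lemma XDK_ll: assumes "1 \<le> n"
  shows "(XD n K Z W * Mk n K Z) $$ (n-1,n-1) = 0"
proof -
  let ?X = "Xinv n K Z" and ?N = "NZ n K W" and ?M = "Mk n K Z"
  have l: "n - 1 < n" using assms by simp
  have X: "?X \<in> carrier_mat n n" and N: "?N \<in> carrier_mat n n" and M: "?M \<in> carrier_mat n n" by auto
  have "XD n K Z W * ?M = - (?X * ?N * ?X * ?M)" unfolding XD_def by simp
  also have "?X * ?N * ?X * ?M = ?X * ?N" using X N M
    by (simp add: assoc_mult_mat[of _ n n _ n _ n] Xinv_left)
  finally have e: "XD n K Z W * ?M = - (?X * ?N)" .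
  have "(?X * ?N) $$ (n-1,n-1) = 0"
  proof (cases "even K")
    case True
    have rM: "\<forall>j<n. ?M $$ (n-1,j) = (if j = n-1 then 1 else 0)" using True by (auto simp: Mk_def)
    have rX: "\<forall>j<n. ?X $$ (n-1,j) = (if j = n-1 then 1 else 0)"
    proof (intro allI impI)
      fix j assume j: "j < n"
      have "(?M * ?X) $$ (n-1,j) = ?X $$ (n-1,j)" using l j rM by (intro mult_rowe[of _ n]) auto
      then show "?X $$ (n-1,j) = (if j = n-1 then 1 else 0)" using j l by (cases "j = n-1") (auto simp: Xinv_right)
    qed
    have "(?X * ?N) $$ (n-1,n-1) = ?N $$ (n-1,n-1)" using l rX by (intro mult_rowe[of _ n]) auto
    then show ?thesis using l by (simp add: NZ_def)
  next
    case False
    have "(?X * ?N) $$ (n-1,n-1) = (\<Sum>j<n. ?X $$ (n-1,j) * ?N $$ (j,n-1))" using mult_entry[OF X N l l] .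
    also have "\<dots> = 0" using False l by (intro sum.neutral) (auto simp: NZ_def)
    finally show ?thesis .
  qed
  then show ?thesis using e l by simp
qed

lemma S_not_sub: assumes n: "2 \<le> n" and K: "1 \<le> K" and S: "Z \<in> S_set n K"
  shows "\<not> submersion_at n K Z"
proof
  assume "submersion_at n K Z"
  then obtain D where D: "is_differential n K Z D" "D ` dirs n K = carrier_vec n" unfolding submersion_at_def by auto
  have n1: "1 \<le> n" and l: "n - 1 < n" using n by auto
  let ?M = "Mk n K Z"
  have fk: "\<forall>k\<in>set [1..<K]. fixl n (Xinv n k Z)"
  proof
    fix k assume "k \<in> set [1..<K]"
    then have "1 \<le> k" "k < K" by auto
    then show "fixl n (Xinv n k Z)" using S n unfolding S_set_def by (intro fixl_Xinv fixl_Mk) auto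
  qed
  have key: "(\<Sum>j<n. Dfun n K Z W $ j * ?M $$ (j, n-1)) = 0" for W
  proof -
    have up: "[1..<K+1] = [1..<K] @ [K]" using K by simp
    have d1: "DL n Z W [K] (1\<^sub>m n) (0\<^sub>m n n) = XD n K Z W" by simp
    have p1: "PL n Z [K] (1\<^sub>m n) = Xinv n K Z" by simp
    have DLe: "DL n Z W [1..<K+1] (1\<^sub>m n) (0\<^sub>m n n) = DL n Z W [1..<K] (Xinv n K Z) (XD n K Z W)"
      unfolding up DL_append d1 p1 ..
    have "(\<Sum>j<n. Dfun n K Z W $ j * ?M $$ (j, n-1)) = (DL n Z W [1..<K+1] (1\<^sub>m n) (0\<^sub>m n n) * ?M) $$ (n-1,n-1)"
      unfolding Dfun_def using l by (subst mult_entry) auto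
    also have "\<dots> = (XD n K Z W * ?M) $$ (n-1,n-1)"
      unfolding DLe using fk n1 by (intro DL_fix) (auto simp: Xinv_left fixl_one)
    also have "\<dots> = 0" using XDK_ll[OF n1] .
    finally show ?thesis .
  qed
  have "unit_vec n (n-1) \<in> carrier_vec n" by simp
  then obtain W where W: "W \<in> dirs n K" "D W = unit_vec n (n-1)" using D(2) by (metis imageE)
  have "D W = Dfun n K Z W" using D_unique[OF n1 D(1) W(1)] .
  then have "(\<Sum>j<n. unit_vec n (n-1) $ j * ?M $$ (j, n-1)) = 0" using key[of W] W by simp
  moreover have "(\<Sum>j<n. unit_vec n (n-1) $ j * ?M $$ (j, n-1)) = ?M $$ (n-1,n-1)"
  proof -
    have "(\<Sum>j<n. unit_vec n (n-1) $ j * ?M $$ (j, n-1)) = (\<Sum>j<n. if j = n-1 then ?M $$ (j, n-1) else 0)"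
      by (intro sum.cong) (auto simp: unit_vec_def)
    then show ?thesis using l by (simp add: sum.delta)
  qed
  moreover have "?M $$ (n-1,n-1) = 1" using l by (simp add: Mk_def)
  ultimately show False by simp
qed


definition vm :: "nat \<Rightarrow> complex vec \<Rightarrow> complex mat \<Rightarrow> complex vec" where
  "vm n x A = vec n (\<lambda>j. \<Sum>i<n. x$i * A$$(i,j))"

lemma vm_carrier[simp]: "vm n x A \<in> carrier_vec n" "dim_vec (vm n x A) = n" by (auto simp: vm_def)
lemma vm_index[simp]: "j < n \<Longrightarrow> vm n x A $ j = (\<Sum>i<n. x$i * A$$(i,j))" by (simp add: vm_def)

lemma row_mult_vm: assumes "(A::complex mat) \<in> carrier_mat n n" "B \<in> carrier_mat n n" "i < n"
  shows "row (A*B) i = vm n (row A i) B"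
proof (rule eq_vecI)
  fix j assume "j < dim_vec (vm n (row A i) B)"
  then have j: "j < n" by simp
  have "row (A*B) i $ j = (A*B)$$(i,j)" using assms j by simp
  also have "\<dots> = (\<Sum>l<n. A$$(i,l) * B$$(l,j))" using mult_entry[OF assms(1,2,3) j] .
  also have "\<dots> = vm n (row A i) B $ j" using assms j by simp
  finally show "row (A*B) i $ j = vm n (row A i) B $ j" .
qed (use assms in auto)

lemma vm_vm: assumes "A \<in> carrier_mat n n" "B \<in> carrier_mat n n"
  shows "vm n (vm n x A) B = vm n x (A*B)"
proof (rule eq_vecI)
  fix j assume "j < dim_vec (vm n x (A*B))"
  then have j: "j < n" by simp
  have "vm n (vm n x A) B $ j = (\<Sum>l<n. (\<Sum>i<n. x$i * A$$(i,l)) * B$$(l,j))" using j by simp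
  also have "\<dots> = (\<Sum>i<n. x$i * (\<Sum>l<n. A$$(i,l) * B$$(l,j)))"
    unfolding sum_distrib_left sum_distrib_right mult.assoc by (rule sum.swap)
  also have "\<dots> = (\<Sum>i<n. x$i * (A*B)$$(i,j))"
  proof (intro sum.cong refl)
    fix i assume "i \<in> {..<n}"
    then show "x$i * (\<Sum>l<n. A$$(i,l) * B$$(l,j)) = x$i * (A*B)$$(i,j)" using mult_entry[OF assms _ j, of i] by simp
  qed
  also have "\<dots> = vm n x (A*B) $ j" using j by simp
  finally show "vm n (vm n x A) B $ j = vm n x (A*B) $ j" .
qed auto

lemma vm_add_mat: assumes "A \<in> carrier_mat n n" "B \<in> carrier_mat n n"
  shows "vm n x (A + B) = vm n x A + vm n x B"
  using assms by (intro eq_vecI) (auto simp: sum.distrib distrib_left)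

lemma vm_uminus_mat: assumes "A \<in> carrier_mat n n"
  shows "vm n x (- A) = - vm n x A"
  using assms by (intro eq_vecI) (auto simp: sum_negf)

lemma vm_one: assumes "x \<in> carrier_vec n" shows "vm n x (1\<^sub>m n) = x"
proof (rule eq_vecI)
  fix j assume "j < dim_vec x"
  then have j: "j < n" using assms by simp
  have "vm n x (1\<^sub>m n) $ j = (\<Sum>i<n. if i = j then x$i else 0)" using j by (intro trans[OF vm_index[OF j]] sum.cong) auto
  then show "vm n x (1\<^sub>m n) $ j = x $ j" using j by (simp add: sum.delta')
qed (use assms in auto)

lemma row_add_mat: assumes "A \<in> carrier_mat n n" "B \<in> carrier_mat n n" "i < n"
  shows "row (A + B) i = row A i + row B i"
  using assms by (intro eq_vecI) auto

lemma XD_zero: "NZ n k W = 0\<^sub>m n n \<Longrightarrow> XD n k Z W = 0\<^sub>m n n"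
  unfolding XD_def by (intro eq_matI) auto

lemma PL_zero: "PL n Z L (0\<^sub>m n n) = 0\<^sub>m n n"
  by (induction L) auto

lemma DL_zero: assumes "\<forall>k\<in>set L. NZ n k W = 0\<^sub>m n n" "D \<in> carrier_mat n n" "P \<in> carrier_mat n n"
  shows "DL n Z W L P D = PL n Z L D"
  using assms(1) proof (induction L)
  case Nil then show ?case by simp
next
  case (Cons k L)
  then have "XD n k Z W = 0\<^sub>m n n" by (simp add: XD_zero)
  then show ?case using Cons assms by simp
qed

lemma upt_split: "i \<le> j \<Longrightarrow> j \<le> k \<Longrightarrow> [i..<k] = [i..<j] @ [j..<k]"
  using upt_add_eq_append[of i j "k-j"] by simp

lemma Dfun_block: assumes n: "1 \<le> n" and ab: "1 \<le> a" "a \<le> b" "b \<le> K+1"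
  and z: "\<forall>k. (1 \<le> k \<and> k < a) \<or> (b \<le> k \<and> k \<le> K) \<longrightarrow> NZ n k W = 0\<^sub>m n n"
  and f: "\<forall>k. 1 \<le> k \<and> k < a \<longrightarrow> fixl n (Xinv n k Z)"
  shows "Dfun n K Z W = row (DL n Z W [a..<b] (PL n Z [b..<K+1] (1\<^sub>m n)) (0\<^sub>m n n)) (n-1)"
proof -
  let ?T = "PL n Z [b..<K+1] (1\<^sub>m n)"
  let ?R = "DL n Z W [a..<b] ?T (0\<^sub>m n n)"
  have u1: "[1..<K+1] = [1..<a] @ [a..<K+1]" by (rule upt_split) (use ab in auto)
  have u2: "[a..<K+1] = [a..<b] @ [b..<K+1]" by (rule upt_split) (use ab in auto)
  have up: "[1..<K+1] = [1..<a] @ [a..<b] @ [b..<K+1]" by (simp only: u1 u2)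
  have d3: "DL n Z W [b..<K+1] (1\<^sub>m n) (0\<^sub>m n n) = 0\<^sub>m n n"
    using z by (subst DL_zero) (auto simp: PL_zero)
  have pa: "PL n Z ([a..<b] @ [b..<K+1]) (1\<^sub>m n) = PL n Z [a..<b] ?T" by (simp add: PL_append)
  have R: "?R \<in> carrier_mat n n" by simp
  have "DL n Z W [1..<K+1] (1\<^sub>m n) (0\<^sub>m n n) = DL n Z W [1..<a] (PL n Z [a..<b] ?T) ?R"
    unfolding up DL_append d3 pa ..
  also have "\<dots> = PL n Z [1..<a] ?R" using z R by (intro DL_zero) auto
  also have "\<dots> = PL n Z [1..<a] (1\<^sub>m n) * ?R" using R by (simp add: PL_mult)
  finally have e: "DL n Z W [1..<K+1] (1\<^sub>m n) (0\<^sub>m n n) = PL n Z [1..<a] (1\<^sub>m n) * ?R" .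
  have fx: "fixl n (PL n Z [1..<a] (1\<^sub>m n))" using f n by (intro fixl_PL) (auto simp: fixl_one)
  have l: "n - 1 < n" using n by simp
  show ?thesis unfolding Dfun_def e
  proof (rule eq_vecI)
    fix j assume "j < dim_vec (row ?R (n-1))"
    then have j: "j < n" by simp
    have "(PL n Z [1..<a] (1\<^sub>m n) * ?R) $$ (n-1,j) = ?R $$ (n-1,j)"
      using fx l j by (intro mult_rowe[of _ n]) (auto simp: fixl_def)
    then show "row (PL n Z [1..<a] (1\<^sub>m n) * ?R) (n-1) $ j = row ?R (n-1) $ j" using l j by simp
  qed simp
qed


lemma vm_add_vec: "vm n (x + y) A = vm n x A + vm n y A" if "x \<in> carrier_vec n" "y \<in> carrier_vec n"
  using that by (intro eq_vecI) (auto simp: sum.distrib distrib_right)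

lemma vm_uminus_vec: "vm n (- x) A = - vm n x A" if "x \<in> carrier_vec n"
  using that by (intro eq_vecI) (auto simp: sum_negf)

lemma vm_minus_vec: "vm n (x - y) A = vm n x A - vm n y A" if "x \<in> carrier_vec n" "y \<in> carrier_vec n"
  using that by (intro eq_vecI) (auto simp: sum_subtractf left_diff_distrib)

fun RL :: "nat \<Rightarrow> (nat \<Rightarrow> nat \<Rightarrow> nat \<Rightarrow> complex) \<Rightarrow> nat list \<Rightarrow> complex mat" where
  "RL n Y [] = 1\<^sub>m n"
| "RL n Y (k#L) = RL n Y L * Mk n k Y"

lemma RL_carrier[simp]: "RL n Y L \<in> carrier_mat n n" by (induction L) auto

lemma RL_PL: "RL n Y L * PL n Y L (1\<^sub>m n) = 1\<^sub>m n"
proof (induction L)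
  case Nil then show ?case by simp
next
  case (Cons k L)
  have R: "RL n Y L \<in> carrier_mat n n" and M: "Mk n k Y \<in> carrier_mat n n" and X: "Xinv n k Y \<in> carrier_mat n n"
    and P: "PL n Y L (1\<^sub>m n) \<in> carrier_mat n n" by auto
  have "RL n Y L * Mk n k Y * (Xinv n k Y * PL n Y L (1\<^sub>m n)) = RL n Y L * (Mk n k Y * (Xinv n k Y * PL n Y L (1\<^sub>m n)))"
    using assoc_mult_mat[OF R M, of _ n] X P by simp
  also have "Mk n k Y * (Xinv n k Y * PL n Y L (1\<^sub>m n)) = PL n Y L (1\<^sub>m n)"
    using assoc_mult_mat[OF M X P, symmetric] P by (simp add: Xinv_right)
  finally show ?case using Cons by simp
qed

lemma row_vm_DL2: assumes "1 \<le> n"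
  defines "l \<equiv> n - 1"
  assumes X1: "X1 \<in> carrier_mat n n" and X2: "X2 \<in> carrier_mat n n" and T: "T \<in> carrier_mat n n"
    and N1: "N1 \<in> carrier_mat n n" and N2: "N2 \<in> carrier_mat n n"
  shows "row ((- (X1 * N1 * X1)) * (X2 * T) + X1 * ((- (X2 * N2 * X2)) * T + X2 * 0\<^sub>m n n)) l
     = - vm n (vm n (vm n (row X1 l) N1) X1 + vm n (vm n (row X1 l) X2) N2) (X2 * T)"
proof -
  have l: "l < n" using assms(1) l_def by simp
  let ?u = "row X1 l"
  have u: "?u \<in> carrier_vec n" using X1 l by simp
  have G: "X2 * T \<in> carrier_mat n n" using X2 T by simp
  have e1: "row ((- (X1 * N1 * X1)) * (X2 * T)) l = - vm n (vm n (vm n ?u N1) X1) (X2 * T)"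
  proof -
    have "row ((- (X1 * N1 * X1)) * (X2 * T)) l = vm n (row (- (X1 * N1 * X1)) l) (X2 * T)"
      using X1 N1 G l by (intro row_mult_vm) auto
    also have "row (- (X1 * N1 * X1)) l = - row (X1 * N1 * X1) l" using X1 N1 l by simp
    also have "row (X1 * N1 * X1) l = vm n (vm n ?u N1) X1"
      using X1 N1 l by (simp add: row_mult_vm vm_vm)
    finally show ?thesis using X1 N1 G by (simp add: vm_uminus_vec)
  qed
  have e2: "row (X1 * ((- (X2 * N2 * X2)) * T + X2 * 0\<^sub>m n n)) l = - vm n (vm n (vm n ?u X2) N2) (X2 * T)"
  proof -
    have z: "(- (X2 * N2 * X2)) * T + X2 * 0\<^sub>m n n = - (X2 * (N2 * (X2 * T)))"
      using X2 N2 T by (simp add: assoc_mult_mat[of _ n n _ n _ n])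
    have "row (X1 * ((- (X2 * N2 * X2)) * T + X2 * 0\<^sub>m n n)) l = vm n ?u (- (X2 * (N2 * (X2 * T))))"
      unfolding z using X1 X2 N2 T l by (intro row_mult_vm) auto
    also have "\<dots> = - vm n ?u (X2 * (N2 * (X2 * T)))" using X2 N2 T by (intro vm_uminus_mat) auto
    also have "vm n ?u (X2 * (N2 * (X2 * T))) = vm n (vm n (vm n ?u X2) N2) (X2 * T)"
      using X2 N2 T by (simp add: vm_vm assoc_mult_mat[of X2 n n N2 n "X2 * T" n])
    finally show ?thesis .
  qed
  have "row ((- (X1 * N1 * X1)) * (X2 * T) + X1 * ((- (X2 * N2 * X2)) * T + X2 * 0\<^sub>m n n)) l
     = row ((- (X1 * N1 * X1)) * (X2 * T)) l + row (X1 * ((- (X2 * N2 * X2)) * T + X2 * 0\<^sub>m n n)) l"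
    using X1 X2 N1 N2 T l by (intro row_add_mat) auto
  also have "\<dots> = - vm n (vm n (vm n ?u N1) X1) (X2 * T) - vm n (vm n (vm n ?u X2) N2) (X2 * T)"
    unfolding e1 e2 by (intro eq_vecI) auto
  also have "\<dots> = - vm n (vm n (vm n ?u N1) X1 + vm n (vm n ?u X2) N2) (X2 * T)"
    by (intro eq_vecI) (auto simp: vm_add_vec)
  finally show ?thesis .
qed


lemma caseA:
  assumes n: "2 \<le> n" and a: "odd a" "1 \<le> a" "a < K"
    and f: "\<forall>k. 1 \<le> k \<and> k < a \<longrightarrow> fixl n (Xinv n k Z)"
    and nz: "\<exists>j. j < n - 1 \<and> Mk n a Z $$ (n-1, j) \<noteq> 0"
    and v: "v \<in> carrier_vec n"
  shows "\<exists>W \<in> dirs n K. Dfun n K Z W = v"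
proof -
  define l where "l = n - 1"
  have l: "l < n" "Suc l = n" using n l_def by auto
  define X1 where "X1 = Xinv n a Z"
  define X2 where "X2 = Xinv n (Suc a) Z"
  define M1 where "M1 = Mk n a Z"
  define M2 where "M2 = Mk n (Suc a) Z"
  define T where "T = PL n Z [Suc (Suc a)..<K+1] (1\<^sub>m n)"
  define G where "G = X2 * T"
  define R where "R = RL n Z [Suc a..<K+1]"
  have cX1: "X1 \<in> carrier_mat n n" and cX2: "X2 \<in> carrier_mat n n" and cM1: "M1 \<in> carrier_mat n n"
    and cM2: "M2 \<in> carrier_mat n n" and cT: "T \<in> carrier_mat n n" and cG: "G \<in> carrier_mat n n"
    and cR: "R \<in> carrier_mat n n"
    by (auto simp: X1_def X2_def M1_def M2_def T_def G_def R_def)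
  have dX1: "dim_row X1 = n" "dim_col X1 = n" using cX1 by auto
  have RG: "R * G = 1\<^sub>m n"
  proof -
    have "[Suc a..<K+1] = Suc a # [Suc (Suc a)..<K+1]" using a by (simp add: upt_conv_Cons)
    then have "PL n Z [Suc a..<K+1] (1\<^sub>m n) = G" by (simp add: G_def X2_def T_def)
    then show ?thesis using RL_PL[of n Z "[Suc a..<K+1]"] by (simp add: R_def)
  qed
  define u where "u = row X1 l"
  define u' where "u' = vm n u X2"
  have cu: "u \<in> carrier_vec n" unfolding u_def by (rule row_carrier_vec[OF l(1) cX1])
  have M1col: "\<forall>i<n. M1 $$ (i,l) = (if i = l then 1 else 0)" using a l by (auto simp: M1_def Mk_def)
  have M2row: "\<forall>j<n. M2 $$ (l,j) = (if j = l then 1 else 0)" using a l by (auto simp: M2_def Mk_def)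
  have X1M1: "X1 * M1 = 1\<^sub>m n" by (simp add: X1_def M1_def Xinv_left)
  have M1X1: "M1 * X1 = 1\<^sub>m n" by (simp add: X1_def M1_def Xinv_right)
  have X2M2: "X2 * M2 = 1\<^sub>m n" by (simp add: X2_def M2_def Xinv_left)
  have ul: "u $ l = 1"
  proof -
    have "(X1 * M1) $$ (l,l) = X1 $$ (l,l)" using cX1 cM1 l M1col by (intro mult_cole) auto
    then show ?thesis using X1M1 l dX1 by (simp add: u_def)
  qed
  have "\<exists>p<l. u' $ p \<noteq> 0"
  proof (rule ccontr)
    assume "\<not> (\<exists>p<l. u' $ p \<noteq> 0)"
    then have z: "\<forall>p<l. u' $ p = 0" by auto
    have uu: "vm n u' M2 = u" using cX2 cM2 cu by (simp add: u'_def vm_vm X2M2 vm_one)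
    have rX1: "\<forall>j<n. X1 $$ (l,j) = (if j = l then 1 else 0)"
    proof (intro allI impI)
      fix j assume j: "j < n"
      show "X1 $$ (l,j) = (if j = l then 1 else 0)"
      proof (cases "j = l")
        case True then show ?thesis using ul l dX1 by (simp add: u_def)
      next
        case False
        then have jl: "j < l" using j l by auto
        have "u $ j = vm n u' M2 $ j" using uu by simp
        also have "\<dots> = (\<Sum>i<n. u'$i * M2$$(i,j))" using j by simp
        also have "\<dots> = 0"
        proof (intro sum.neutral ballI)
          fix i assume "i \<in> {..<n}"
          then have i: "i < n" by simp
          show "u'$i * M2$$(i,j) = 0"
          proof (cases "i < l")
            case True then show ?thesis using z by simp
          next
            case False then have "i = l" using i l by auto
            then show ?thesis using M2row j False jl by simp
          qed
        qed
        finally show ?thesis using False j l dX1 by (simp add: u_def)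
      qed
    qed
    obtain j0 where j0: "j0 < l" "M1 $$ (l, j0) \<noteq> 0" using nz by (auto simp: M1_def l_def)
    have "(X1 * M1) $$ (l,j0) = M1 $$ (l,j0)" using cX1 cM1 l j0 rX1 by (intro mult_rowe) auto
    then show False using X1M1 j0 l by simp
  qed
  then obtain p where p: "p < l" "u' $ p \<noteq> 0" by auto
  define y0 where "y0 = - vm n v R"
  define s where "s = y0 $ l"
  define c where "c = s / u' $ p"
  define z where "z = y0 - s \<cdot>\<^sub>v unit_vec n l"
  define x where "x = vm n z M1"
  have cy0: "y0 \<in> carrier_vec n" by (simp add: y0_def)
  have cz: "z \<in> carrier_vec n" by (simp add: z_def y0_def)
  have xl: "x $ l = 0"
  proof -
    have "x $ l = (\<Sum>i<n. z$i * M1$$(i,l))" using l by (simp add: x_def)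
    also have "\<dots> = (\<Sum>i<n. if i = l then z$i else 0)" using M1col by (intro sum.cong) auto
    also have "\<dots> = z $ l" using l by (simp add: sum.delta')
    also have "\<dots> = 0" using l cy0 by (simp add: z_def s_def)
    finally show ?thesis .
  qed
  define W where "W = (\<lambda>k i j. if k = a \<and> i = n \<and> 1 \<le> j \<and> j < n then x $ (j - 1)
      else if k = Suc a \<and> i = Suc p \<and> j = n then c else (0::complex))"
  have Wd: "W \<in> dirs n K"
    unfolding dirs_def coords_def W_def using a p l by auto
  have N1: "\<And>i j. i < n \<Longrightarrow> j < n \<Longrightarrow> NZ n a W $$ (i,j) = (if i = l \<and> j < l then x $ j else 0)"
    using a l by (auto simp: NZ_def W_def)
  have N2: "\<And>i j. i < n \<Longrightarrow> j < n \<Longrightarrow> NZ n (Suc a) W $$ (i,j) = (if i = p \<and> j = l then c else 0)"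
    using a l p by (auto simp: NZ_def W_def)
  have Nz: "\<forall>k. (1 \<le> k \<and> k < a) \<or> (Suc (Suc a) \<le> k \<and> k \<le> K) \<longrightarrow> NZ n k W = 0\<^sub>m n n"
    by (auto simp: NZ_def W_def intro!: eq_matI)
  have Db: "Dfun n K Z W = row (DL n Z W [a..<Suc (Suc a)] T (0\<^sub>m n n)) l"
    unfolding l_def T_def using n a Nz f by (intro Dfun_block) auto
  have up: "[a..<Suc (Suc a)] = [a, Suc a]" by (simp add: upt_rec)
  have "DL n Z W [a..<Suc (Suc a)] T (0\<^sub>m n n) =
     (- (X1 * NZ n a W * X1)) * (X2 * T) + X1 * ((- (X2 * NZ n (Suc a) W * X2)) * T + X2 * 0\<^sub>m n n)"
    unfolding up by (simp add: XD_def X1_def X2_def)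
  note DLeq = this
  have rv: "row ((- (X1 * NZ n a W * X1)) * (X2 * T) + X1 * ((- (X2 * NZ n (Suc a) W * X2)) * T + X2 * 0\<^sub>m n n)) l
     = - vm n (vm n (vm n u (NZ n a W)) X1 + vm n u' (NZ n (Suc a) W)) G"
    unfolding u_def u'_def G_def l_def by (rule row_vm_DL2) (use n cX1 cX2 cT in auto)
  have Dfe: "Dfun n K Z W = - vm n (vm n (vm n u (NZ n a W)) X1 + vm n u' (NZ n (Suc a) W)) G"
    by (simp only: Db DLeq rv)
  have h1: "vm n u (NZ n a W) = x"
  proof (rule eq_vecI)
    fix j assume "j < dim_vec x"
    then have j: "j < n" by (simp add: x_def)
    have "vm n u (NZ n a W) $ j = (\<Sum>i<n. u$i * NZ n a W $$ (i,j))" using j by simp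
    also have "\<dots> = (\<Sum>i<n. if i = l then (if j < l then x $ j else 0) else 0)"
      using N1 j ul by (intro sum.cong) auto
    also have "\<dots> = x $ j" using l j xl by (cases "j = l") (auto simp: sum.delta')
    finally show "vm n u (NZ n a W) $ j = x $ j" .
  qed (simp add: x_def)
  have h2: "vm n u' (NZ n (Suc a) W) = s \<cdot>\<^sub>v unit_vec n l"
  proof (rule eq_vecI)
    fix j assume "j < dim_vec (s \<cdot>\<^sub>v unit_vec n l)"
    then have j: "j < n" by simp
    have "vm n u' (NZ n (Suc a) W) $ j = (\<Sum>i<n. u'$i * NZ n (Suc a) W $$ (i,j))" using j by simp
    also have "\<dots> = (\<Sum>i<n. if i = p then (if j = l then u' $ p * c else 0) else 0)"
      using N2 j by (intro sum.cong) auto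
    also have "\<dots> = (if j = l then s else 0)" using p l j by (simp add: sum.delta' c_def)
    also have "\<dots> = (s \<cdot>\<^sub>v unit_vec n l) $ j" using j by (simp add: unit_vec_def)
    finally show "vm n u' (NZ n (Suc a) W) $ j = (s \<cdot>\<^sub>v unit_vec n l) $ j" .
  qed simp
  have h3: "vm n x X1 = z" using cM1 cX1 cz by (simp add: x_def vm_vm M1X1 vm_one)
  have inner: "vm n (vm n u (NZ n a W)) X1 + vm n u' (NZ n (Suc a) W) = y0"
    unfolding h1 h2 h3 z_def using cy0 by (intro eq_vecI) auto
  have "Dfun n K Z W = - vm n y0 G" using Dfe inner by simp
  also have "\<dots> = vm n (vm n v R) G" unfolding y0_def by (simp add: vm_uminus_vec)
  also have "\<dots> = v" using cR cG v by (simp add: vm_vm RG vm_one)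
  finally show ?thesis using Wd by blast
qed


lemma Xinv_row_even: assumes "even k" "1 \<le> n" "j < n"
  shows "Xinv n k Z $$ (n-1,j) = (if j = n-1 then 1 else 0)"
proof -
  have rM: "\<forall>j<n. Mk n k Z $$ (n-1,j) = (if j = n-1 then 1 else 0)" using assms by (auto simp: Mk_def)
  have "(Mk n k Z * Xinv n k Z) $$ (n-1,j) = Xinv n k Z $$ (n-1,j)" using assms rM by (intro mult_rowe[of _ n]) auto
  then show ?thesis using assms by (cases "j = n-1") (auto simp: Xinv_right)
qed

lemma Xinv_col_odd: assumes "odd k" "1 \<le> n" "i < n"
  shows "Xinv n k Z $$ (i,n-1) = (if i = n-1 then 1 else 0)"
proof -
  have cM: "\<forall>i<n. Mk n k Z $$ (i,n-1) = (if i = n-1 then 1 else 0)" using assms by (auto simp: Mk_def)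
  have "(Xinv n k Z * Mk n k Z) $$ (i,n-1) = Xinv n k Z $$ (i,n-1)" using assms cM by (intro mult_cole[of _ n]) auto
  then show ?thesis using assms by (cases "i = n-1") (auto simp: Xinv_left)
qed

lemma vm_unit: assumes "A \<in> carrier_mat n n" "l < n" shows "vm n (unit_vec n l) A = row A l"
proof (rule eq_vecI)
  fix j assume "j < dim_vec (row A l)"
  then have j: "j < n" using assms by simp
  have "vm n (unit_vec n l) A $ j = (\<Sum>i<n. if i = l then A $$ (i,j) else 0)"
    using j by (simp only: vm_index[OF j], intro sum.cong) (auto simp: unit_vec_def)
  then show "vm n (unit_vec n l) A $ j = row A l $ j" using assms j by (simp add: sum.delta')
qed (use assms in auto)

lemma row_unit_row: assumes "A \<in> carrier_mat n n" "(B::complex mat) \<in> carrier_mat n n" "l < n"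
  "\<forall>j<n. A $$ (l,j) = (if j = l then 1 else 0)"
  shows "row (A * B) l = row B l"
proof (rule eq_vecI)
  fix j assume "j < dim_vec (row B l)"
  then have j: "j < n" using assms by simp
  have "(A*B)$$(l,j) = B$$(l,j)" using mult_rowe[OF assms(1,2,3) j assms(4)] .
  then show "row (A*B) l $ j = row B l $ j" using assms j by simp
qed (use assms in auto)

lemma row_vm_DL3: assumes "1 \<le> n"
  defines "l \<equiv> n - 1"
  assumes Xb: "Xb \<in> carrier_mat n n" and Xa: "Xa \<in> carrier_mat n n" and X3: "X3 \<in> carrier_mat n n"
    and T: "T \<in> carrier_mat n n"
    and N1: "N1 \<in> carrier_mat n n" and N3: "N3 \<in> carrier_mat n n"
    and rb: "\<forall>j<n. Xb $$ (l,j) = (if j = l then 1 else 0)"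
    and ra: "\<forall>j<n. Xa $$ (l,j) = (if j = l then 1 else 0)"
  shows "row ((- (Xb * N1 * Xb)) * (Xa * (X3 * T)) + Xb * (0\<^sub>m n n * (X3 * T) + Xa * ((- (X3 * N3 * X3)) * T + X3 * 0\<^sub>m n n))) l
     = - vm n (vm n (vm n (row N1 l) Xb) Xa + vm n (row X3 l) N3) (X3 * T)"
proof -
  have l: "l < n" using assms(1) l_def by simp
  have G: "X3 * T \<in> carrier_mat n n" using X3 T by simp
  have uXb: "row Xb l = unit_vec n l"
    using rb Xb l by (intro eq_vecI) (auto simp: unit_vec_def)
  have e1: "row ((- (Xb * N1 * Xb)) * (Xa * (X3 * T))) l = - vm n (vm n (vm n (row N1 l) Xb) Xa) (X3 * T)"
  proof -
    have "row ((- (Xb * N1 * Xb)) * (Xa * (X3 * T))) l = vm n (row (- (Xb * N1 * Xb)) l) (Xa * (X3 * T))"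
      using Xb N1 Xa G l by (intro row_mult_vm) auto
    also have "row (- (Xb * N1 * Xb)) l = - row (Xb * N1 * Xb) l" using Xb N1 l by simp
    also have "row (Xb * N1 * Xb) l = vm n (vm n (row Xb l) N1) Xb"
      using Xb N1 l by (simp add: row_mult_vm vm_vm)
    also have "vm n (row Xb l) N1 = row N1 l" using uXb vm_unit[OF N1 l] by simp
    finally show ?thesis using Xb N1 Xa G by (simp add: vm_uminus_vec vm_vm)
  qed
  have z: "0\<^sub>m n n * (X3 * T) + Xa * ((- (X3 * N3 * X3)) * T + X3 * 0\<^sub>m n n) = Xa * (- (X3 * (N3 * (X3 * T))))"
    using Xa X3 N3 T by (simp add: assoc_mult_mat[of _ n n _ n _ n])
  have e2: "row (Xb * (0\<^sub>m n n * (X3 * T) + Xa * ((- (X3 * N3 * X3)) * T + X3 * 0\<^sub>m n n))) l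
      = - vm n (vm n (row X3 l) N3) (X3 * T)"
  proof -
    have "row (Xb * (Xa * (- (X3 * (N3 * (X3 * T)))))) l = row (Xa * (- (X3 * (N3 * (X3 * T))))) l"
      using Xb Xa X3 N3 T l rb by (intro row_unit_row) auto
    also have "\<dots> = row (- (X3 * (N3 * (X3 * T)))) l"
      using Xa X3 N3 T l ra by (intro row_unit_row) auto
    also have "\<dots> = - row (X3 * (N3 * (X3 * T))) l" using X3 N3 T l by simp
    also have "row (X3 * (N3 * (X3 * T))) l = vm n (row X3 l) (N3 * (X3 * T))"
      using X3 N3 T l by (intro row_mult_vm) auto
    also have "\<dots> = vm n (vm n (row X3 l) N3) (X3 * T)" using N3 G by (simp add: vm_vm)
    finally show ?thesis unfolding z .
  qed
  have "row ((- (Xb * N1 * Xb)) * (Xa * (X3 * T)) + Xb * (0\<^sub>m n n * (X3 * T) + Xa * ((- (X3 * N3 * X3)) * T + X3 * 0\<^sub>m n n))) l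
     = row ((- (Xb * N1 * Xb)) * (Xa * (X3 * T))) l + row (Xb * (0\<^sub>m n n * (X3 * T) + Xa * ((- (X3 * N3 * X3)) * T + X3 * 0\<^sub>m n n))) l"
    using Xb Xa X3 N1 N3 T l by (intro row_add_mat) auto
  also have "\<dots> = - vm n (vm n (vm n (row N1 l) Xb) Xa) (X3 * T) - vm n (vm n (row X3 l) N3) (X3 * T)"
    unfolding e1 e2 by (intro eq_vecI) auto
  also have "\<dots> = - vm n (vm n (vm n (row N1 l) Xb) Xa + vm n (row X3 l) N3) (X3 * T)"
    by (intro eq_vecI) (auto simp: vm_add_vec)
  finally show ?thesis .
qed


lemma caseB:
  assumes n: "2 \<le> n" and a: "even a" "1 \<le> a" "a < K"
    and f: "\<forall>k. 1 \<le> k \<and> k < a \<longrightarrow> fixl n (Xinv n k Z)"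
    and nz: "\<exists>i. i < n - 1 \<and> Mk n a Z $$ (i, n-1) \<noteq> 0"
    and v: "v \<in> carrier_vec n"
  shows "\<exists>W \<in> dirs n K. Dfun n K Z W = v"
proof -
  define l where "l = n - 1"
  have l: "l < n" "Suc l = n" using n l_def by auto
  define b where "b = a - 1"
  have a2: "2 \<le> a" using a(1,2) by presburger
  have b12: "a = Suc b" "odd b" using a a2 by (auto simp: b_def)
  have "1 \<le> b" using b12(2) by (cases b) auto
  note b = b12 this
  define Xb where "Xb = Xinv n b Z"
  define Xa where "Xa = Xinv n a Z"
  define X3 where "X3 = Xinv n (Suc a) Z"
  define Mb where "Mb = Mk n b Z"
  define Ma where "Ma = Mk n a Z"
  define T where "T = PL n Z [Suc (Suc a)..<K+1] (1\<^sub>m n)"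
  define G where "G = X3 * T"
  define R where "R = RL n Z [Suc a..<K+1]"
  have cXb: "Xb \<in> carrier_mat n n" and cXa: "Xa \<in> carrier_mat n n" and cX3: "X3 \<in> carrier_mat n n"
    and cMb: "Mb \<in> carrier_mat n n" and cMa: "Ma \<in> carrier_mat n n" and cT: "T \<in> carrier_mat n n"
    and cG: "G \<in> carrier_mat n n" and cR: "R \<in> carrier_mat n n"
    by (auto simp: Xb_def Xa_def X3_def Mb_def Ma_def T_def G_def R_def)
  have dX3: "dim_row X3 = n" "dim_col X3 = n" using cX3 by auto
  have RG: "R * G = 1\<^sub>m n"
  proof -
    have "[Suc a..<K+1] = Suc a # [Suc (Suc a)..<K+1]" using a by (simp add: upt_conv_Cons)
    then have "PL n Z [Suc a..<K+1] (1\<^sub>m n) = G" by (simp add: G_def X3_def T_def)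
    then show ?thesis using RL_PL[of n Z "[Suc a..<K+1]"] by (simp add: R_def)
  qed
  have fb: "fixl n Xb" using f b by (simp add: Xb_def)
  have rb: "\<forall>j<n. Xb $$ (l,j) = (if j = l then 1 else 0)" using fb by (simp add: fixl_def l_def)
  have ra: "\<forall>j<n. Xa $$ (l,j) = (if j = l then 1 else 0)"
    using a n Xinv_row_even[of a n _ Z] by (simp add: Xa_def l_def)
  have Mbcol: "\<forall>i<n. Mb $$ (i,l) = (if i = l then 1 else 0)" using b l by (auto simp: Mb_def Mk_def)
  have MbXb: "Mb * Xb = 1\<^sub>m n" by (simp add: Xb_def Mb_def Xinv_right)
  have MaXa: "Ma * Xa = 1\<^sub>m n" by (simp add: Xa_def Ma_def Xinv_right)
  define w where "w = row X3 l"
  have wl: "w $ l = 1" using Xinv_col_odd[of "Suc a" n l Z] a l dX3 by (simp add: w_def X3_def l_def)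
  have "\<exists>p<l. Xa $$ (p,l) \<noteq> 0"
  proof (rule ccontr)
    assume "\<not> (\<exists>p<l. Xa $$ (p,l) \<noteq> 0)"
    then have colXa: "\<forall>i<n. Xa $$ (i,l) = (if i = l then 1 else 0)" using ra l by auto
    obtain i0 where i0: "i0 < l" "Ma $$ (i0, l) \<noteq> 0" using nz by (auto simp: Ma_def l_def)
    have "(Ma * Xa) $$ (i0,l) = Ma $$ (i0,l)" using cMa cXa i0 l colXa by (intro mult_cole[of _ n]) auto
    then show False using MaXa i0 l by simp
  qed
  then obtain p where p: "p < l" "Xa $$ (p,l) \<noteq> 0" by auto
  define y0 where "y0 = - vm n v R"
  define s where "s = y0 $ l"
  define cf where "cf = s / Xa $$ (p,l)"
  define b' where "b' = cf \<cdot>\<^sub>v unit_vec n p"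
  define a' where "a' = vm n b' Mb"
  define x where "x = y0 - vm n b' Xa"
  have cy0: "y0 \<in> carrier_vec n" by (simp add: y0_def)
  have cb': "b' \<in> carrier_vec n" by (simp add: b'_def)
  have al: "a' $ l = 0"
  proof -
    have "a' $ l = (\<Sum>i<n. b'$i * Mb$$(i,l))" using l by (simp add: a'_def)
    also have "\<dots> = (\<Sum>i<n. if i = l then b'$i else 0)" using Mbcol by (intro sum.cong) auto
    also have "\<dots> = b' $ l" using l by (simp add: sum.delta')
    also have "\<dots> = 0" using l p by (simp add: b'_def unit_vec_def)
    finally show ?thesis .
  qed
  have xl: "x $ l = 0"
  proof -
    have "vm n b' Xa $ l = (\<Sum>i<n. b'$i * Xa$$(i,l))" using l by simp
    also have "\<dots> = (\<Sum>i<n. if i = p then cf * Xa$$(p,l) else 0)" using p l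
      by (intro sum.cong) (auto simp: b'_def unit_vec_def)
    also have "\<dots> = s" using p l by (simp add: sum.delta' cf_def)
    finally show ?thesis using l cy0 by (simp add: x_def s_def)
  qed
  define W where "W = (\<lambda>k i j. if k = b \<and> i = n \<and> 1 \<le> j \<and> j < n then a' $ (j - 1)
      else if k = Suc a \<and> i = n \<and> 1 \<le> j \<and> j < n then x $ (j - 1) else (0::complex))"
  have Wd: "W \<in> dirs n K"
    unfolding dirs_def coords_def W_def using a b l by auto
  have bne: "b \<noteq> Suc a" "a \<noteq> b" "a \<noteq> Suc a" using b by auto
  have N1: "\<And>i j. i < n \<Longrightarrow> j < n \<Longrightarrow> NZ n b W $$ (i,j) = (if i = l \<and> j < l then a' $ j else 0)"
    using b l bne by (auto simp: NZ_def W_def)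
  have N3: "\<And>i j. i < n \<Longrightarrow> j < n \<Longrightarrow> NZ n (Suc a) W $$ (i,j) = (if i = l \<and> j < l then x $ j else 0)"
    using a l bne by (auto simp: NZ_def W_def)
  have Na: "NZ n a W = 0\<^sub>m n n" using b by (auto simp: NZ_def W_def intro!: eq_matI)
  have Nz: "\<forall>k. (1 \<le> k \<and> k < b) \<or> (Suc (Suc a) \<le> k \<and> k \<le> K) \<longrightarrow> NZ n k W = 0\<^sub>m n n"
    using b by (auto simp: NZ_def W_def intro!: eq_matI)
  have fb': "\<forall>k. 1 \<le> k \<and> k < b \<longrightarrow> fixl n (Xinv n k Z)" using f b by auto
  have Db: "Dfun n K Z W = row (DL n Z W [b..<Suc (Suc a)] T (0\<^sub>m n n)) l"
    unfolding l_def T_def using n a b Nz fb' by (intro Dfun_block) auto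
  have up: "[b..<Suc (Suc a)] = [b, a, Suc a]" using b by (simp add: upt_rec)
  have XDa: "XD n a Z W = 0\<^sub>m n n" using Na by (rule XD_zero)
  have DLeq: "DL n Z W [b..<Suc (Suc a)] T (0\<^sub>m n n) =
     XD n b Z W * (Xa * (X3 * T)) + Xb * (0\<^sub>m n n * (X3 * T) + Xa * (XD n (Suc a) Z W * T + X3 * 0\<^sub>m n n))"
    unfolding up by (simp only: DL.simps PL_Cons PL_Nil XDa Xa_def Xb_def X3_def)
  have rv: "row ((- (Xb * NZ n b W * Xb)) * (Xa * (X3 * T)) + Xb * (0\<^sub>m n n * (X3 * T) + Xa * ((- (X3 * NZ n (Suc a) W * X3)) * T + X3 * 0\<^sub>m n n))) l
     = - vm n (vm n (vm n (row (NZ n b W) l) Xb) Xa + vm n w (NZ n (Suc a) W)) G"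
    unfolding w_def G_def l_def by (rule row_vm_DL3) (use n cXb cXa cX3 cT rb ra in \<open>auto simp: l_def\<close>)
  have Dfe: "Dfun n K Z W = - vm n (vm n (vm n (row (NZ n b W) l) Xb) Xa + vm n w (NZ n (Suc a) W)) G"
    using Db DLeq rv unfolding XD_def Xb_def X3_def by (simp only:)
  have h1: "row (NZ n b W) l = a'"
  proof (rule eq_vecI)
    fix j assume "j < dim_vec a'"
    then have j: "j < n" by (simp add: a'_def)
    show "row (NZ n b W) l $ j = a' $ j" using N1[OF l(1) j] j l al by (cases "j = l") auto
  qed (simp add: a'_def)
  have h2: "vm n w (NZ n (Suc a) W) = x"
  proof (rule eq_vecI)
    fix j assume "j < dim_vec x"
    then have j: "j < n" by (simp add: x_def y0_def)
    have "vm n w (NZ n (Suc a) W) $ j = (\<Sum>i<n. w$i * NZ n (Suc a) W $$ (i,j))" using j by simp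
    also have "\<dots> = (\<Sum>i<n. if i = l then (if j < l then x $ j else 0) else 0)"
      using N3 j wl by (intro sum.cong) auto
    also have "\<dots> = x $ j" using l j xl by (cases "j = l") (auto simp: sum.delta')
    finally show "vm n w (NZ n (Suc a) W) $ j = x $ j" .
  qed (simp add: x_def y0_def)
  have h3: "vm n a' Xb = b'" using cMb cXb cb' by (simp add: a'_def vm_vm MbXb vm_one)
  have inner: "vm n (vm n (row (NZ n b W) l) Xb) Xa + vm n w (NZ n (Suc a) W) = y0"
    unfolding h1 h2 h3 x_def using cy0 by (intro eq_vecI) auto
  have "Dfun n K Z W = - vm n y0 G" using Dfe inner by simp
  also have "\<dots> = vm n (vm n v R) G" unfolding y0_def by (simp add: vm_uminus_vec)
  also have "\<dots> = v" using cR cG v by (simp add: vm_vm RG vm_one)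
  finally show ?thesis using Wd by blast
qed


lemma notS_sub: assumes n: "2 \<le> n" and K: "2 \<le> K" and S: "Z \<notin> S_set n K"
  shows "submersion_at n K Z"
proof -
  define good where "good k \<longleftrightarrow> (odd k \<longrightarrow> (\<forall>j. 1 \<le> j \<and> j \<le> n - 1 \<longrightarrow> Z k n j = 0)) \<and>
      (even k \<longrightarrow> (\<forall>i. 1 \<le> i \<and> i \<le> n - 1 \<longrightarrow> Z k i n = 0))" for k
  have "\<exists>k. 1 \<le> k \<and> k < K \<and> \<not> good k" using S unfolding S_set_def good_def by auto
  then obtain a where a: "1 \<le> a \<and> a < K \<and> \<not> good a" and amin: "\<And>k. k < a \<Longrightarrow> \<not> (1 \<le> k \<and> k < K \<and> \<not> good k)"
    using exists_least_iff[of "\<lambda>k. 1 \<le> k \<and> k < K \<and> \<not> good k"] by blast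
  have f: "\<forall>k. 1 \<le> k \<and> k < a \<longrightarrow> fixl n (Xinv n k Z)"
  proof (intro allI impI)
    fix k assume k: "1 \<le> k \<and> k < a"
    then have "good k" using amin[of k] a by auto
    then show "fixl n (Xinv n k Z)" using n unfolding good_def by (intro fixl_Xinv fixl_Mk) auto
  qed
  have surj: "\<forall>v::complex vec \<in> carrier_vec n. \<exists>W \<in> dirs n K. Dfun n K Z W = v"
  proof
    fix v :: "complex vec" assume v: "v \<in> carrier_vec n"
    show "\<exists>W \<in> dirs n K. Dfun n K Z W = v"
    proof (cases "odd a")
      case True
      then obtain j where j: "1 \<le> j" "j \<le> n - 1" "Z a n j \<noteq> 0" using a unfolding good_def by auto
      have "Mk n a Z $$ (n-1, j-1) \<noteq> 0" using j True n by (simp add: Mk_def)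
      then have "\<exists>j. j < n - 1 \<and> Mk n a Z $$ (n-1, j) \<noteq> 0" using j by (intro exI[of _ "j-1"]) auto
      then show ?thesis using caseA[OF n True _ _ f _ v] a by auto
    next
      case False
      then obtain i where i: "1 \<le> i" "i \<le> n - 1" "Z a i n \<noteq> 0" using a unfolding good_def by auto
      have "Mk n a Z $$ (i-1, n-1) \<noteq> 0" using i False n by (simp add: Mk_def)
      then have "\<exists>i. i < n - 1 \<and> Mk n a Z $$ (i, n-1) \<noteq> 0" using i by (intro exI[of _ "i-1"]) auto
      then show ?thesis using caseB[OF n _ _ _ f _ v] a False by auto
    qed
  qed
  have n1: "1 \<le> n" using n by simp
  have d: "is_differential n K Z (Dfun n K Z)" using Dfun_diff[OF n1] .
  have "Dfun n K Z ` dirs n K = carrier_vec n"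
  proof
    show "Dfun n K Z ` dirs n K \<subseteq> carrier_vec n" using d unfolding is_differential_def by auto
    show "carrier_vec n \<subseteq> Dfun n K Z ` dirs n K"
    proof
      fix v :: "complex vec" assume "v \<in> carrier_vec n"
      then obtain W where "W \<in> dirs n K" "Dfun n K Z W = v" using surj by blast
      then show "v \<in> Dfun n K Z ` dirs n K" by (auto intro: image_eqI[of v _ W])
    qed
  qed
  then show ?thesis unfolding submersion_at_def using d by blast
qed

theorem lemma2p5:
  fixes n K :: nat and Z :: "nat \<Rightarrow> nat \<Rightarrow> nat \<Rightarrow> complex"
  assumes "n \<ge> 2" and "K \<ge> 2"
  shows "submersion_at n K Z \<longleftrightarrow> Z \<notin> S_set n K"
  using S_not_sub[of n K Z] notS_sub[of n K Z] assms by auto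

end
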